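(* For each $n$ let $\boldsymbol{P}\in\mathbb{R}^{n\times n}$ be a deterministic permutation matrix with $\mathrm{tr}[\boldsymbol{P}]=0$, and let $\boldsymbol{w}=(w_1,\ldots,w_n)^\top$ have i.i.d. entries from $\mathbb{P}_w\in\mathcal{D}_1$ (not depending on $n$). Then for any fixed $\delta>0$, $\lim_{n\to\infty}\mathbb{P}\bigl(|\boldsymbol{w}^\top\boldsymbol{P}\boldsymbol{w}|/n>\delta\bigr)=0$.
   Context: $\mathcal{D}_1$ is the class of distributions of $\xi$ with $\mathbb{E}[\xi]=0$ and $1\le\mathbb{E}[|\xi|]\le2$. *)

theory Defs
  imports "HOL-Probability.Probability"
begin

text \<open>n x n real matrices are represented as functions nat => nat => real,
  only entries with indices below n are relevant.\<close>

definition perm_matrix :: "nat \<Rightarrow> (nat \<Rightarrow> nat \<Rightarrow> real) \<Rightarrow> bool" where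
  "perm_matrix n P \<longleftrightarrow>
     (\<exists>\<sigma>. \<sigma> permutes {..<n} \<and> (\<forall>i<n. \<forall>j<n. P i j = (if \<sigma> i = j then 1 else 0)))"

definition mat_trace :: "nat \<Rightarrow> (nat \<Rightarrow> nat \<Rightarrow> real) \<Rightarrow> real" where
  "mat_trace n P = (\<Sum>i<n. P i i)"

definition quad_form :: "nat \<Rightarrow> (nat \<Rightarrow> nat \<Rightarrow> real) \<Rightarrow> (nat \<Rightarrow> real) \<Rightarrow> real" where
  "quad_form n P w = (\<Sum>i<n. \<Sum>j<n. w i * P i j * w j)"

definition in_D1 :: "real measure \<Rightarrow> bool" where
  "in_D1 \<mu> \<longleftrightarrow> prob_space \<mu> \<and> sets \<mu> = sets borel \<and> integrable \<mu> (\<lambda>x. x)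
     \<and> (\<integral>x. x \<partial>\<mu>) = 0 \<and> 1 \<le> (\<integral>x. \<bar>x\<bar> \<partial>\<mu>) \<and> (\<integral>x. \<bar>x\<bar> \<partial>\<mu>) \<le> 2"

end

theory Submission
  imports Defs
begin


lemma prod_two:
  fixes g h :: "real \<Rightarrow> real"
  assumes "finite I" "i \<in> I" "j \<in> I" "i \<noteq> j"
  shows "(\<Prod>l\<in>I. (if l = i then g else if l = j then h else (\<lambda>_. 1)) (x l)) = g (x i) * h (x j)"
proof -
  have "(\<Prod>l\<in>I. (if l = i then g else if l = j then h else (\<lambda>_. 1)) (x l))
     = g (x i) * (\<Prod>l\<in>I-{i}. (if l = i then g else if l = j then h else (\<lambda>_. 1)) (x l))"
    using assms by (subst prod.remove[of _ i]) auto
  also have "(\<Prod>l\<in>I-{i}. (if l = i then g else if l = j then h else (\<lambda>_. 1)) (x l))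
     = h (x j) * (\<Prod>l\<in>I-{i}-{j}. (if l = i then g else if l = j then h else (\<lambda>_. 1)) (x l))"
    using assms by (subst prod.remove[of _ j]) auto
  also have "(\<Prod>l\<in>I-{i}-{j}. (if l = i then g else if l = j then h else (\<lambda>_. 1)) (x l)) = 1"
    by (intro prod.neutral) auto
  finally show ?thesis by simp
qed

lemma prod_one:
  fixes g :: "real \<Rightarrow> real"
  assumes "finite I" "i \<in> I"
  shows "(\<Prod>l\<in>I. (if l = i then g else (\<lambda>_. 1)) (x l)) = g (x i)"
proof -
  have "(\<Prod>l\<in>I. (if l = i then g else (\<lambda>_. 1)) (x l))
     = g (x i) * (\<Prod>l\<in>I-{i}. (if l = i then g else (\<lambda>_. 1)) (x l))"
    using assms by (subst prod.remove[of _ i]) auto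
  also have "(\<Prod>l\<in>I-{i}. (if l = i then g else (\<lambda>_. 1)) (x l)) = 1"
    by (intro prod.neutral) auto
  finally show ?thesis by simp
qed

lemma pps: "prob_space \<mu> \<Longrightarrow> product_prob_space (\<lambda>_. \<mu>)"
  unfolding product_prob_space_def product_prob_space_axioms_def product_sigma_finite_def
  by (auto simp: prob_space_imp_sigma_finite)

lemma coord1:
  fixes g :: "real \<Rightarrow> real"
  assumes "prob_space \<mu>" "finite I" "i \<in> I" "integrable \<mu> g"
  shows "integrable (PiM I (\<lambda>_. \<mu>)) (\<lambda>x. g (x i))"
    and "(\<integral>x. g (x i) \<partial>PiM I (\<lambda>_. \<mu>)) = (\<integral>y. g y \<partial>\<mu>)"
proof -
  interpret product_prob_space "\<lambda>_. \<mu>" using pps[OF assms(1)] .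
  let ?F = "\<lambda>l. if l = i then g else (\<lambda>_. 1::real)"
  have int: "\<And>l. l \<in> I \<Longrightarrow> integrable \<mu> (?F l)" using assms(4) by auto
  show "integrable (PiM I (\<lambda>_. \<mu>)) (\<lambda>x. g (x i))"
  proof -
    have "integrable (PiM I (\<lambda>_. \<mu>)) (\<lambda>x. (\<Prod>l\<in>I. ?F l (x l)))"
      by (rule product_integrable_prod[OF assms(2)]) (use int in auto)
    then show ?thesis using prod_one[OF assms(2,3), of g] by simp
  qed
  have eq: "(\<integral>x. (\<Prod>l\<in>I. ?F l (x l)) \<partial>PiM I (\<lambda>_. \<mu>)) = (\<Prod>l\<in>I. integral\<^sup>L \<mu> (?F l))"
    by (rule product_integral_prod[OF assms(2)]) (use int in auto)
  show "(\<integral>x. g (x i) \<partial>PiM I (\<lambda>_. \<mu>)) = (\<integral>y. g y \<partial>\<mu>)"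
  proof -
    have "(\<Prod>l\<in>I. integral\<^sup>L \<mu> (?F l)) = (\<Prod>l\<in>I. if l = i then integral\<^sup>L \<mu> g else 1)"
      by (intro prod.cong) (auto simp: prob_space.prob_space[OF assms(1)])
    also have "\<dots> = integral\<^sup>L \<mu> g" using assms(2,3) by (simp add: prod.delta)
    finally show ?thesis using eq prod_one[OF assms(2,3), of g] by simp
  qed
qed

lemma coord2:
  fixes g h :: "real \<Rightarrow> real"
  assumes "prob_space \<mu>" "finite I" "i \<in> I" "j \<in> I" "i \<noteq> j" "integrable \<mu> g" "integrable \<mu> h"
  shows "integrable (PiM I (\<lambda>_. \<mu>)) (\<lambda>x. g (x i) * h (x j))"
    and "(\<integral>x. g (x i) * h (x j) \<partial>PiM I (\<lambda>_. \<mu>)) = (\<integral>y. g y \<partial>\<mu>) * (\<integral>y. h y \<partial>\<mu>)"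
proof -
  interpret product_prob_space "\<lambda>_. \<mu>" using pps[OF assms(1)] .
  let ?F = "\<lambda>l. if l = i then g else if l = j then h else (\<lambda>_. 1::real)"
  have int: "\<And>l. l \<in> I \<Longrightarrow> integrable \<mu> (?F l)" using assms(6,7) by auto
  show "integrable (PiM I (\<lambda>_. \<mu>)) (\<lambda>x. g (x i) * h (x j))"
  proof -
    have "integrable (PiM I (\<lambda>_. \<mu>)) (\<lambda>x. (\<Prod>l\<in>I. ?F l (x l)))"
      by (rule product_integrable_prod[OF assms(2)]) (use int in auto)
    then show ?thesis using prod_two[OF assms(2-5), of g h] by simp
  qed
  have eq: "(\<integral>x. (\<Prod>l\<in>I. ?F l (x l)) \<partial>PiM I (\<lambda>_. \<mu>)) = (\<Prod>l\<in>I. integral\<^sup>L \<mu> (?F l))"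
    by (rule product_integral_prod[OF assms(2)]) (use int in auto)
  show "(\<integral>x. g (x i) * h (x j) \<partial>PiM I (\<lambda>_. \<mu>)) = (\<integral>y. g y \<partial>\<mu>) * (\<integral>y. h y \<partial>\<mu>)"
  proof -
    have "(\<Prod>l\<in>I. integral\<^sup>L \<mu> (?F l)) = (\<Prod>l\<in>I. (if l = i then (\<lambda>_. integral\<^sup>L \<mu> g) else if l = j then (\<lambda>_. integral\<^sup>L \<mu> h) else (\<lambda>_. 1)) (0::real))"
      by (intro prod.cong) (auto simp: prob_space.prob_space[OF assms(1)])
    also have "\<dots> = integral\<^sup>L \<mu> g * integral\<^sup>L \<mu> h" by (rule prod_two[OF assms(2-5)])
    finally show ?thesis using eq prod_two[OF assms(2-5), of g h] by simp
  qed
qed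

lemma coord_zero:
  fixes f :: "real \<Rightarrow> real" and H :: "(nat \<Rightarrow> real) \<Rightarrow> real"
  assumes "prob_space \<mu>" "finite I" "j \<in> I"
    and "integrable (PiM I (\<lambda>_. \<mu>)) (\<lambda>x. f (x j) * H x)"
    and "(\<integral>y. f y \<partial>\<mu>) = 0"
    and "\<And>x y. H (x(j := y)) = H x"
  shows "(\<integral>x. f (x j) * H x \<partial>PiM I (\<lambda>_. \<mu>)) = 0"
proof -
  interpret product_prob_space "\<lambda>_. \<mu>" using pps[OF assms(1)] .
  have I: "I = insert j (I - {j})" using assms(3) by auto
  have "(\<integral>x. f (x j) * H x \<partial>PiM I (\<lambda>_. \<mu>))
      = (\<integral>x. (\<integral>y. f ((x(j:=y)) j) * H (x(j:=y)) \<partial>\<mu>) \<partial>PiM (I - {j}) (\<lambda>_. \<mu>))"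
    using product_integral_insert[of "I - {j}" j "\<lambda>x. f (x j) * H x"] assms(2,4) I by auto
  also have "\<dots> = (\<integral>x. H x * (\<integral>y. f y \<partial>\<mu>) \<partial>PiM (I - {j}) (\<lambda>_. \<mu>))"
    by (simp add: assms(6) mult.commute)
  finally show ?thesis using assms(5) by simp
qed


definition tr :: "real \<Rightarrow> real \<Rightarrow> real" where
  "tr K x = (if \<bar>x\<bar> \<le> K then x else 0)"
definition am :: "real measure \<Rightarrow> real \<Rightarrow> real \<Rightarrow> real" where
  "am \<mu> K x = tr K x - (\<integral>y. tr K y \<partial>\<mu>)"
definition bm :: "real measure \<Rightarrow> real \<Rightarrow> real \<Rightarrow> real" where
  "bm \<mu> K x = x - am \<mu> K x"

lemma meas_mu: "sets \<mu> = sets borel \<Longrightarrow> f \<in> borel_measurable borel \<Longrightarrow> f \<in> borel_measurable \<mu>"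
  using measurable_cong_sets[of \<mu> borel borel borel] by blast

lemma tr_meas[measurable]: "tr K \<in> borel_measurable borel"
proof -
  have c: "{x::real. \<bar>x\<bar> \<le> K} \<in> sets borel"
    by (intro borel_closed closed_Collect_le continuous_intros)
  have "tr K = (\<lambda>x. if x \<in> {x::real. \<bar>x\<bar> \<le> K} then x else 0)" by (auto simp: tr_def fun_eq_iff)
  then show ?thesis using c by (simp add: measurable_If_set)
qed

lemma am_meas[measurable]: "am \<mu> K \<in> borel_measurable borel"
proof -
  have "am \<mu> K = (\<lambda>x. tr K x - (\<integral>y. tr K y \<partial>\<mu>))" by (auto simp: am_def fun_eq_iff)
  then show ?thesis using tr_meas[of K] by (simp add: borel_measurable_diff)
qed

lemma bm_meas[measurable]: "bm \<mu> K \<in> borel_measurable borel"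
proof -
  have "bm \<mu> K = (\<lambda>x. x - am \<mu> K x)" by (auto simp: bm_def fun_eq_iff)
  then show ?thesis using am_meas[of \<mu> K] by (simp add: borel_measurable_diff)
qed

lemma tr_bound: "\<bar>tr K x\<bar> \<le> \<bar>x\<bar>" "0 \<le> K \<Longrightarrow> \<bar>tr K x\<bar> \<le> K"
  unfolding tr_def by auto

context
  fixes \<mu> :: "real measure" and K :: real
  assumes D: "in_D1 \<mu>" and K: "0 \<le> K"
begin

lemma ps: "prob_space \<mu>" using D by (simp add: in_D1_def)
lemma sets_mu: "sets \<mu> = sets borel" using D by (simp add: in_D1_def)
lemma int_x: "integrable \<mu> (\<lambda>x. x)" using D by (simp add: in_D1_def)
lemma mean0: "(\<integral>x. x \<partial>\<mu>) = 0" using D by (simp add: in_D1_def)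
lemma abs_le2: "(\<integral>x. \<bar>x\<bar> \<partial>\<mu>) \<le> 2" using D by (simp add: in_D1_def)

lemma int_tr: "integrable \<mu> (tr K)"
proof -
  interpret prob_space \<mu> by (rule ps)
  show ?thesis
    by (rule integrable_const_bound[where B=K]) (use tr_bound(2)[OF K] meas_mu[OF sets_mu tr_meas] in auto)
qed

lemma int_tr_abs: "\<bar>\<integral>y. tr K y \<partial>\<mu>\<bar> \<le> (\<integral>x. \<bar>x\<bar> \<partial>\<mu>)"
  by (rule integral_abs_bound_integral) (use int_tr int_x tr_bound(1) in auto)

lemma int_tr_K: "\<bar>\<integral>y. tr K y \<partial>\<mu>\<bar> \<le> K"
proof -
  interpret prob_space \<mu> by (rule ps)
  have "\<bar>\<integral>y. tr K y \<partial>\<mu>\<bar> \<le> (\<integral>y. K \<partial>\<mu>)"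
    by (rule integral_abs_bound_integral) (use int_tr tr_bound(2)[OF K] in auto)
  then show ?thesis by (simp add: prob_space)
qed

lemma int_am: "integrable \<mu> (am \<mu> K)"
proof -
  interpret prob_space \<mu> by (rule ps)
  show ?thesis unfolding am_def using int_tr by simp
qed

lemma int_bm: "integrable \<mu> (bm \<mu> K)"
  unfolding bm_def using int_am int_x by auto

lemma am_mean: "(\<integral>x. am \<mu> K x \<partial>\<mu>) = 0"
proof -
  interpret prob_space \<mu> by (rule ps)
  show ?thesis unfolding am_def using int_tr by (simp add: prob_space)
qed

lemma am_bound: "\<bar>am \<mu> K x\<bar> \<le> 2 * K"
  unfolding am_def using tr_bound(2)[OF K, of x] int_tr_K by linarith

lemma am_abs_int: "(\<integral>x. \<bar>am \<mu> K x\<bar> \<partial>\<mu>) \<le> 4"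
proof -
  interpret prob_space \<mu> by (rule ps)
  let ?c = "\<bar>\<integral>y. tr K y \<partial>\<mu>\<bar>"
  have ib: "integrable \<mu> (\<lambda>x. \<bar>am \<mu> K x\<bar>)" using int_am by auto
  have ic: "integrable \<mu> (\<lambda>x. \<bar>x\<bar> + ?c)" using int_x by auto
  have pw: "\<bar>am \<mu> K x\<bar> \<le> \<bar>x\<bar> + ?c" for x
    using tr_bound(1)[of K x] unfolding am_def by linarith
  have "(\<integral>x. \<bar>am \<mu> K x\<bar> \<partial>\<mu>) \<le> (\<integral>x. \<bar>x\<bar> + ?c \<partial>\<mu>)"
    by (rule integral_mono[OF ib ic pw])
  also have "\<dots> = (\<integral>x. \<bar>x\<bar> \<partial>\<mu>) + ?c" using int_x by (simp add: prob_space)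
  also have "\<dots> \<le> 4" using int_tr_abs abs_le2 by linarith
  finally show ?thesis .
qed

lemma bm_abs_int: "(\<integral>x. \<bar>bm \<mu> K x\<bar> \<partial>\<mu>) \<le> 2 * (\<integral>x. \<bar>x - tr K x\<bar> \<partial>\<mu>)"
proof -
  interpret prob_space \<mu> by (rule ps)
  have c: "(\<integral>y. tr K y \<partial>\<mu>) = - (\<integral>x. x - tr K x \<partial>\<mu>)"
    using int_x int_tr mean0 by simp
  have i2: "integrable \<mu> (\<lambda>x. x - tr K x)" using int_x int_tr by auto
  have cb: "\<bar>\<integral>y. tr K y \<partial>\<mu>\<bar> \<le> (\<integral>x. \<bar>x - tr K x\<bar> \<partial>\<mu>)"
    unfolding c by (simp add: integral_abs_bound_integral i2)
  let ?c = "\<bar>\<integral>y. tr K y \<partial>\<mu>\<bar>"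
  have ib: "integrable \<mu> (\<lambda>x. \<bar>bm \<mu> K x\<bar>)" using int_bm by auto
  have ic: "integrable \<mu> (\<lambda>x. \<bar>x - tr K x\<bar> + ?c)" using i2 by auto
  have pw: "\<bar>bm \<mu> K x\<bar> \<le> \<bar>x - tr K x\<bar> + ?c" for x
    by (simp add: bm_def am_def)
  have "(\<integral>x. \<bar>bm \<mu> K x\<bar> \<partial>\<mu>) \<le> (\<integral>x. \<bar>x - tr K x\<bar> + ?c \<partial>\<mu>)"
    by (rule integral_mono[OF ib ic pw])
  also have "\<dots> = (\<integral>x. \<bar>x - tr K x\<bar> \<partial>\<mu>) + ?c" using i2 by (simp add: prob_space)
  also have "\<dots> \<le> 2 * (\<integral>x. \<bar>x - tr K x\<bar> \<partial>\<mu>)" using cb by linarith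
  finally show ?thesis .
qed

end


lemma tail_lim:
  assumes D: "in_D1 \<mu>"
  shows "(\<lambda>k::nat. \<integral>x. \<bar>x - tr (real k) x\<bar> \<partial>\<mu>) \<longlonglongrightarrow> 0"
proof -
  have "(\<lambda>k::nat. \<integral>x. \<bar>x - tr (real k) x\<bar> \<partial>\<mu>) \<longlonglongrightarrow> (\<integral>x. 0 \<partial>\<mu>)"
  proof (rule integral_dominated_convergence[where w="\<lambda>x. \<bar>x\<bar>"])
    show "(\<lambda>x. 0::real) \<in> borel_measurable \<mu>" by simp
    show "(\<lambda>x. \<bar>x - tr (real k) x\<bar>) \<in> borel_measurable \<mu>" for k
    proof (rule meas_mu[OF sets_mu[OF D order_refl]])
      have "(\<lambda>x. x - tr (real k) x) \<in> borel_measurable borel"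
        using tr_meas[of "real k"] by (simp add: borel_measurable_diff)
      then show "(\<lambda>x. \<bar>x - tr (real k) x\<bar>) \<in> borel_measurable borel"
        by (rule borel_measurable_abs)
    qed
    show "integrable \<mu> (\<lambda>x. \<bar>x\<bar>)" using int_x[OF D order_refl] by auto
    show "AE x in \<mu>. norm \<bar>x - tr (real k) x\<bar> \<le> \<bar>x\<bar>" for k
      by (auto simp: tr_def)
    show "AE x in \<mu>. (\<lambda>k. \<bar>x - tr (real k) x\<bar>) \<longlonglongrightarrow> 0"
    proof (intro AE_I2)
      fix x :: real
      obtain N :: nat where "\<bar>x\<bar> \<le> real N" using real_arch_simple by blast
      then have "\<forall>k\<ge>N. \<bar>x - tr (real k) x\<bar> = 0"
        by (auto simp: tr_def)
      then show "(\<lambda>k. \<bar>x - tr (real k) x\<bar>) \<longlonglongrightarrow> 0"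
        by (intro tendsto_eventually) (auto simp: eventually_sequentially)
    qed
  qed
  then show ?thesis by simp
qed



lemma comp_meas:
  assumes "sets \<mu> = sets borel" "i \<in> I" "f \<in> borel_measurable borel"
  shows "(\<lambda>w. f (w i)) \<in> borel_measurable (PiM I (\<lambda>_. \<mu>))"
proof -
  have "(\<lambda>w. w i) \<in> measurable (PiM I (\<lambda>_. \<mu>)) \<mu>"
    using measurable_component_singleton[OF assms(2), of "\<lambda>_. \<mu>"] by simp
  moreover have "f \<in> borel_measurable \<mu>" by (rule meas_mu[OF assms(1,3)])
  ultimately show ?thesis by (rule measurable_compose)
qed

lemma abs4: "\<bar>x1\<bar> \<le> c \<Longrightarrow> \<bar>x2\<bar> \<le> c \<Longrightarrow> \<bar>x3\<bar> \<le> c \<Longrightarrow> \<bar>x4\<bar> \<le> c \<Longrightarrow>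
  \<bar>x1 * x2 * (x3 * x4)\<bar> \<le> c * c * (c * c)" for x1 x2 x3 x4 c :: real
proof -
  assume h: "\<bar>x1\<bar> \<le> c" "\<bar>x2\<bar> \<le> c" "\<bar>x3\<bar> \<le> c" "\<bar>x4\<bar> \<le> c"
  have c0: "0 \<le> c" using abs_ge_zero[of x1] h(1) by linarith
  have 1: "\<bar>x1\<bar> * \<bar>x2\<bar> \<le> c * c" using h c0 by (rule_tac mult_mono) auto
  have 2: "\<bar>x3\<bar> * \<bar>x4\<bar> \<le> c * c" using h c0 by (rule_tac mult_mono) auto
  have "(\<bar>x1\<bar> * \<bar>x2\<bar>) * (\<bar>x3\<bar> * \<bar>x4\<bar>) \<le> (c * c) * (c * c)"
    using 1 2 c0 by (rule_tac mult_mono) auto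
  then show ?thesis by (simp add: abs_mult)
qed

lemma id_meas: "(\<lambda>x::real. x) \<in> borel_measurable borel" by simp
lemma abs_meas: "(\<lambda>x::real. \<bar>x\<bar>) \<in> borel_measurable borel" by simp

context
  fixes \<mu> :: "real measure" and K :: real and n :: nat and \<sigma> :: "nat \<Rightarrow> nat"
  assumes D: "in_D1 \<mu>" and K: "0 \<le> K" and perm: "\<sigma> permutes {..<n}"
    and der: "\<And>i. i < n \<Longrightarrow> \<sigma> i \<noteq> i"
begin

abbreviation "PM \<equiv> PiM {..<n} (\<lambda>_. \<mu>)"
abbreviation "aK \<equiv> am \<mu> K"
abbreviation "bK \<equiv> bm \<mu> K"

lemma smu: "sets \<mu> = sets borel" using sets_mu[OF D K] .
lemma psmu: "prob_space \<mu>" using ps[OF D K] .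
lemma psPM: "prob_space PM" by (rule prob_space_PiM) (use psmu in auto)

lemma sig_lt: "i < n \<Longrightarrow> \<sigma> i < n"
  using permutes_in_image[OF perm, of i] by simp

lemma sig_inj: "\<sigma> i = \<sigma> k \<Longrightarrow> i = k"
  using perm permutes_inj by (metis injD)

lemma mA: "(\<lambda>w. \<Sum>i<n. aK (w i) * aK (w (\<sigma> i))) \<in> borel_measurable PM"
  by (intro borel_measurable_sum borel_measurable_times comp_meas[OF smu] am_meas)
     (auto simp: sig_lt)

lemma mQ: "(\<lambda>w. \<Sum>i<n. w i * w (\<sigma> i)) \<in> borel_measurable PM"
  by (intro borel_measurable_sum borel_measurable_times comp_meas[OF smu] id_meas)
     (auto simp: sig_lt)

lemma mS: "(\<lambda>w. \<Sum>i<n. \<bar>aK (w i)\<bar> * \<bar>bK (w (\<sigma> i))\<bar> + \<bar>bK (w i)\<bar> * \<bar>w (\<sigma> i)\<bar>) \<in> borel_measurable PM"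
proof -
  have [simp]: "(\<lambda>x. \<bar>aK x\<bar>) \<in> borel_measurable borel" "(\<lambda>x. \<bar>bK x\<bar>) \<in> borel_measurable borel"
    using am_meas bm_meas by (auto intro: borel_measurable_abs)
  show ?thesis
    by (intro borel_measurable_sum borel_measurable_times borel_measurable_add comp_meas[OF smu] abs_meas)
       (auto simp: sig_lt)
qed

lemma int_bdd: "f \<in> borel_measurable PM \<Longrightarrow> (\<And>w. \<bar>f w\<bar> \<le> (B::real)) \<Longrightarrow> integrable PM f"
proof -
  assume f: "f \<in> borel_measurable PM" and B: "\<And>w. \<bar>f w\<bar> \<le> B"
  interpret prob_space PM by (rule psPM)
  show ?thesis by (rule integrable_const_bound[where B=B]) (use f B in auto)
qed

definition T :: "nat \<Rightarrow> nat \<Rightarrow> (nat \<Rightarrow> real) \<Rightarrow> real" where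
  "T i k w = aK (w i) * aK (w (\<sigma> i)) * (aK (w k) * aK (w (\<sigma> k)))"

lemma T_bound: "\<bar>T i k w\<bar> \<le> 16 * K^4"
proof -
  have "\<bar>T i k w\<bar> \<le> (2*K) * (2*K) * ((2*K) * (2*K))"
    unfolding T_def by (intro abs4 am_bound[OF D K])
  then show ?thesis by (simp add: power4_eq_xxxx)
qed

lemma T_meas: "i < n \<Longrightarrow> k < n \<Longrightarrow> T i k \<in> borel_measurable PM"
proof -
  assume "i < n" "k < n"
  then have "(\<lambda>w. T i k w) \<in> borel_measurable PM"
    unfolding T_def
    by (intro borel_measurable_times comp_meas[OF smu] am_meas) (auto simp: sig_lt)
  then show ?thesis by simp
qed

lemma T_int: "i < n \<Longrightarrow> k < n \<Longrightarrow> integrable PM (T i k)"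
  using int_bdd[OF T_meas T_bound] .

lemma T_zero:
  assumes "i < n" "k < n" "k \<noteq> i" "k \<noteq> \<sigma> i"
  shows "(\<integral>w. T i k w \<partial>PM) = 0"
proof -
  let ?H = "\<lambda>w. aK (w i) * (aK (w k) * aK (w (\<sigma> k)))"
  have eq: "T i k w = aK (w (\<sigma> i)) * ?H w" for w unfolding T_def by (simp add: ac_simps)
  have ne: "\<sigma> i \<noteq> i" "\<sigma> i \<noteq> \<sigma> k" using der[OF assms(1)] assms(3) sig_inj by auto
  have "(\<integral>w. aK (w (\<sigma> i)) * ?H w \<partial>PM) = 0"
  proof (rule coord_zero[OF psmu])
    show "finite {..<n}" by simp
    show "\<sigma> i \<in> {..<n}" using sig_lt assms(1) by simp
    show "integrable PM (\<lambda>w. aK (w (\<sigma> i)) * ?H w)"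
      using T_int[OF assms(1,2)] eq by (metis (no_types, lifting) ext)
    show "(\<integral>y. aK y \<partial>\<mu>) = 0" using am_mean[OF D K] .
    show "?H (w(\<sigma> i := y)) = ?H w" for w y using ne assms(4) by simp
  qed
  then show ?thesis using eq by simp
qed

lemma T_le: "i < n \<Longrightarrow> k < n \<Longrightarrow> (\<integral>w. T i k w \<partial>PM) \<le> (if k \<in> {i, \<sigma> i} then 16 * K^4 else 0)"
proof -
  assume ik: "i < n" "k < n"
  interpret prob_space PM by (rule psPM)
  show ?thesis
  proof (cases "k \<in> {i, \<sigma> i}")
    case True
    have "(\<integral>w. T i k w \<partial>PM) \<le> (\<integral>w. 16 * K^4 \<partial>PM)"
      by (rule integral_mono[OF T_int[OF ik]]) (auto intro: abs_le_D1[OF T_bound])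
    then show ?thesis using True by (simp add: prob_space)
  next
    case False
    then show ?thesis using T_zero[OF ik] by auto
  qed
qed

lemma EA2: "(\<integral>w. (\<Sum>i<n. aK (w i) * aK (w (\<sigma> i)))^2 \<partial>PM) \<le> 32 * real n * K^4"
proof -
  have sq: "(\<Sum>i<n. aK (w i) * aK (w (\<sigma> i)))^2 = (\<Sum>i<n. \<Sum>k<n. T i k w)" for w
    unfolding power2_eq_square sum_product T_def by simp
  have "(\<integral>w. (\<Sum>i<n. aK (w i) * aK (w (\<sigma> i)))^2 \<partial>PM) = (\<integral>w. (\<Sum>i<n. \<Sum>k<n. T i k w) \<partial>PM)"
    unfolding sq ..
  also have "\<dots> = (\<Sum>i<n. \<Sum>k<n. (\<integral>w. T i k w \<partial>PM))"
  proof -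
    have "(\<integral>w. (\<Sum>i<n. \<Sum>k<n. T i k w) \<partial>PM) = (\<Sum>i<n. (\<integral>w. (\<Sum>k<n. T i k w) \<partial>PM))"
      by (rule Bochner_Integration.integral_sum[where M=PM and f="\<lambda>i w. \<Sum>k<n. T i k w"]) (auto intro!: integrable_sum T_int)
    also have "\<dots> = (\<Sum>i<n. \<Sum>k<n. (\<integral>w. T i k w \<partial>PM))"
      by (intro sum.cong refl Bochner_Integration.integral_sum) (auto intro!: T_int)
    finally show ?thesis .
  qed
  also have "\<dots> \<le> (\<Sum>i<n. \<Sum>k<n. (if k \<in> {i, \<sigma> i} then 16 * K^4 else 0))"
    by (intro sum_mono T_le) auto
  also have "\<dots> \<le> (\<Sum>i<n. 32 * K^4)"
  proof (intro sum_mono)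
    fix i assume "i \<in> {..<n}"
    have "(\<Sum>k<n. (if k \<in> {i, \<sigma> i} then 16 * K^4 else 0)) = (\<Sum>k\<in>{..<n} \<inter> {i, \<sigma> i}. 16 * K^4)"
      by (rule sum.inter_restrict[symmetric]) simp
    also have "\<dots> = 16 * K^4 * card ({..<n} \<inter> {i, \<sigma> i})" by simp
    also have "\<dots> \<le> 16 * K^4 * 2"
    proof (intro mult_left_mono)
      have "card ({..<n} \<inter> {i, \<sigma> i}) \<le> card {i, \<sigma> i}" by (intro card_mono) auto
      also have "\<dots> \<le> 2" by (simp add: card_insert_le_m1)
      finally show "real (card ({..<n} \<inter> {i, \<sigma> i})) \<le> 2" by simp
    qed (use K in auto)
    finally show "(\<Sum>k<n. (if k \<in> {i, \<sigma> i} then 16 * K^4 else 0)) \<le> 32 * K^4" by simp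
  qed
  also have "\<dots> = 32 * real n * K^4" by simp
  finally show ?thesis .
qed

lemma ES_int: "integrable PM (\<lambda>w. \<Sum>i<n. \<bar>aK (w i)\<bar> * \<bar>bK (w (\<sigma> i))\<bar> + \<bar>bK (w i)\<bar> * \<bar>w (\<sigma> i)\<bar>)"
  and ES: "(\<integral>w. (\<Sum>i<n. \<bar>aK (w i)\<bar> * \<bar>bK (w (\<sigma> i))\<bar> + \<bar>bK (w i)\<bar> * \<bar>w (\<sigma> i)\<bar>) \<partial>PM)
      \<le> 6 * real n * (\<integral>x. \<bar>bK x\<bar> \<partial>\<mu>)"
proof -
  have ia: "integrable \<mu> (\<lambda>x. \<bar>aK x\<bar>)" using int_am[OF D K] by auto
  have ib: "integrable \<mu> (\<lambda>x. \<bar>bK x\<bar>)" using int_bm[OF D K] by auto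
  have ix: "integrable \<mu> (\<lambda>x. \<bar>x\<bar>)" using int_x[OF D K] by auto
  have c1: "integrable PM (\<lambda>w. \<bar>aK (w i)\<bar> * \<bar>bK (w (\<sigma> i))\<bar>)"
    "(\<integral>w. \<bar>aK (w i)\<bar> * \<bar>bK (w (\<sigma> i))\<bar> \<partial>PM) = (\<integral>x. \<bar>aK x\<bar> \<partial>\<mu>) * (\<integral>x. \<bar>bK x\<bar> \<partial>\<mu>)"
    if "i < n" for i
    using coord2[OF psmu, of "{..<n}" i "\<sigma> i" "\<lambda>x. \<bar>aK x\<bar>" "\<lambda>x. \<bar>bK x\<bar>"] ia ib that sig_lt der[OF that, THEN not_sym]
    by auto
  have c2: "integrable PM (\<lambda>w. \<bar>bK (w i)\<bar> * \<bar>w (\<sigma> i)\<bar>)"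
    "(\<integral>w. \<bar>bK (w i)\<bar> * \<bar>w (\<sigma> i)\<bar> \<partial>PM) = (\<integral>x. \<bar>bK x\<bar> \<partial>\<mu>) * (\<integral>x. \<bar>x\<bar> \<partial>\<mu>)"
    if "i < n" for i
    using coord2[OF psmu, of "{..<n}" i "\<sigma> i" "\<lambda>x. \<bar>bK x\<bar>" "\<lambda>x. \<bar>x\<bar>"] ib ix that sig_lt der[OF that, THEN not_sym]
    by auto
  show "integrable PM (\<lambda>w. \<Sum>i<n. \<bar>aK (w i)\<bar> * \<bar>bK (w (\<sigma> i))\<bar> + \<bar>bK (w i)\<bar> * \<bar>w (\<sigma> i)\<bar>)"
    using c1(1) c2(1) by (intro Bochner_Integration.integrable_sum Bochner_Integration.integrable_add) auto
  have "(\<integral>w. (\<Sum>i<n. \<bar>aK (w i)\<bar> * \<bar>bK (w (\<sigma> i))\<bar> + \<bar>bK (w i)\<bar> * \<bar>w (\<sigma> i)\<bar>) \<partial>PM)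
      = (\<Sum>i<n. (\<integral>w. \<bar>aK (w i)\<bar> * \<bar>bK (w (\<sigma> i))\<bar> + \<bar>bK (w i)\<bar> * \<bar>w (\<sigma> i)\<bar> \<partial>PM))"
    by (rule Bochner_Integration.integral_sum) (use c1(1) c2(1) in auto)
  also have "\<dots> = (\<Sum>i<n. (\<integral>x. \<bar>aK x\<bar> \<partial>\<mu>) * (\<integral>x. \<bar>bK x\<bar> \<partial>\<mu>) + (\<integral>x. \<bar>bK x\<bar> \<partial>\<mu>) * (\<integral>x. \<bar>x\<bar> \<partial>\<mu>))"
    by (intro sum.cong refl) (simp add: c1 c2 Bochner_Integration.integral_add)
  also have "\<dots> \<le> (\<Sum>i<n. 6 * (\<integral>x. \<bar>bK x\<bar> \<partial>\<mu>))"
  proof (intro sum_mono)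
    fix i
    have e0: "0 \<le> (\<integral>x. \<bar>bK x\<bar> \<partial>\<mu>)" by simp
    have "(\<integral>x. \<bar>aK x\<bar> \<partial>\<mu>) * (\<integral>x. \<bar>bK x\<bar> \<partial>\<mu>) \<le> 4 * (\<integral>x. \<bar>bK x\<bar> \<partial>\<mu>)"
      by (rule mult_right_mono[OF am_abs_int[OF D K] e0])
    moreover have "(\<integral>x. \<bar>bK x\<bar> \<partial>\<mu>) * (\<integral>x. \<bar>x\<bar> \<partial>\<mu>) \<le> (\<integral>x. \<bar>bK x\<bar> \<partial>\<mu>) * 2"
      by (rule mult_left_mono[OF abs_le2[OF D K] e0])
    ultimately show "(\<integral>x. \<bar>aK x\<bar> \<partial>\<mu>) * (\<integral>x. \<bar>bK x\<bar> \<partial>\<mu>) + (\<integral>x. \<bar>bK x\<bar> \<partial>\<mu>) * (\<integral>x. \<bar>x\<bar> \<partial>\<mu>)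
        \<le> 6 * (\<integral>x. \<bar>bK x\<bar> \<partial>\<mu>)" by linarith
  qed
  also have "\<dots> = 6 * real n * (\<integral>x. \<bar>bK x\<bar> \<partial>\<mu>)" by simp
  finally show "(\<integral>w. (\<Sum>i<n. \<bar>aK (w i)\<bar> * \<bar>bK (w (\<sigma> i))\<bar> + \<bar>bK (w i)\<bar> * \<bar>w (\<sigma> i)\<bar>) \<partial>PM)
      \<le> 6 * real n * (\<integral>x. \<bar>bK x\<bar> \<partial>\<mu>)" .
qed

lemma Q_split: "\<bar>\<Sum>i<n. w i * w (\<sigma> i)\<bar> \<le> \<bar>\<Sum>i<n. aK (w i) * aK (w (\<sigma> i))\<bar>
   + (\<Sum>i<n. \<bar>aK (w i)\<bar> * \<bar>bK (w (\<sigma> i))\<bar> + \<bar>bK (w i)\<bar> * \<bar>w (\<sigma> i)\<bar>)"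
proof -
  have e: "w i * w (\<sigma> i) = aK (w i) * aK (w (\<sigma> i)) + (aK (w i) * bK (w (\<sigma> i)) + bK (w i) * w (\<sigma> i))" for i
    by (simp add: bm_def algebra_simps)
  have "(\<Sum>i<n. w i * w (\<sigma> i)) = (\<Sum>i<n. aK (w i) * aK (w (\<sigma> i))) + (\<Sum>i<n. aK (w i) * bK (w (\<sigma> i)) + bK (w i) * w (\<sigma> i))"
    unfolding e by (simp add: sum.distrib)
  moreover have "\<bar>\<Sum>i<n. aK (w i) * bK (w (\<sigma> i)) + bK (w i) * w (\<sigma> i)\<bar> \<le> (\<Sum>i<n. \<bar>aK (w i) * bK (w (\<sigma> i)) + bK (w i) * w (\<sigma> i)\<bar>)"
    by (rule sum_abs)
  moreover have "(\<Sum>i<n. \<bar>aK (w i) * bK (w (\<sigma> i)) + bK (w i) * w (\<sigma> i)\<bar>) \<le> (\<Sum>i<n. \<bar>aK (w i)\<bar> * \<bar>bK (w (\<sigma> i))\<bar> + \<bar>bK (w i)\<bar> * \<bar>w (\<sigma> i)\<bar>)"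
    by (intro sum_mono) (metis abs_mult abs_triangle_ineq)
  ultimately show ?thesis by linarith
qed

lemma main_bound:
  assumes n: "0 < n" and d: "0 < \<delta>"
  shows "measure PM {w \<in> space PM. \<bar>\<Sum>i<n. w i * w (\<sigma> i)\<bar> / real n > \<delta>}
     \<le> 128 * K^4 / (real n * \<delta>^2) + 12 * (\<integral>x. \<bar>bK x\<bar> \<partial>\<mu>) / \<delta>"
proof -
  interpret prob_space PM by (rule psPM)
  define c where "c = real n * \<delta>"
  have c: "0 < c" using n d by (simp add: c_def)
  define A where "A w = (\<Sum>i<n. aK (w i) * aK (w (\<sigma> i)))" for w
  define S where "S w = (\<Sum>i<n. \<bar>aK (w i)\<bar> * \<bar>bK (w (\<sigma> i))\<bar> + \<bar>bK (w i)\<bar> * \<bar>w (\<sigma> i)\<bar>)" for w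
  define X where "X = {w \<in> space PM. \<bar>\<Sum>i<n. w i * w (\<sigma> i)\<bar> / real n > \<delta>}"
  have S0: "0 \<le> S w" for w unfolding S_def by (intro sum_nonneg) auto
  have mA': "A \<in> borel_measurable PM" using mA unfolding A_def by simp
  have Abd: "\<bar>A w\<bar> \<le> real n * (4 * K^2)" for w
  proof -
    have "\<bar>A w\<bar> \<le> (\<Sum>i<n. \<bar>aK (w i) * aK (w (\<sigma> i))\<bar>)" unfolding A_def by (rule sum_abs)
    also have "\<dots> \<le> (\<Sum>i<n. 4 * K^2)"
    proof (intro sum_mono)
      fix i
      have "\<bar>aK (w i)\<bar> * \<bar>aK (w (\<sigma> i))\<bar> \<le> (2*K) * (2*K)"
        by (intro mult_mono am_bound[OF D K]) (use K in auto)
      then show "\<bar>aK (w i) * aK (w (\<sigma> i))\<bar> \<le> 4 * K^2" by (simp add: abs_mult power2_eq_square)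
    qed
    finally show ?thesis by simp
  qed
  have iA2: "integrable PM (\<lambda>w. (A w)^2)"
  proof (rule int_bdd)
    show "(\<lambda>w. (A w)^2) \<in> borel_measurable PM" using mA' by simp
    show "\<bar>(A w)^2\<bar> \<le> (real n * (4 * K^2))^2" for w
      using power_mono[OF Abd[of w] abs_ge_zero, of 2] by simp
  qed
  have iS: "integrable PM S" using ES_int unfolding S_def by simp
  have mQ': "(\<lambda>w. \<bar>\<Sum>i<n. w i * w (\<sigma> i)\<bar> / real n) \<in> borel_measurable PM"
    using mQ by simp
  have Xs: "X \<in> sets PM" unfolding X_def
    by (rule borel_measurable_less) (use mQ' in simp_all)
  have Xf: "emeasure PM X < \<top>" using emeasure_finite[of X] by (simp add: less_top[symmetric])
  have pw: "indicator X w \<le> (4 / c^2) * (A w)^2 + (2 / c) * S w" if "w \<in> space PM" for w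
  proof (cases "w \<in> X")
    case False
    then show ?thesis using S0[of w] c by simp
  next
    case True
    then have "\<bar>\<Sum>i<n. w i * w (\<sigma> i)\<bar> / real n > \<delta>" by (simp add: X_def)
    then have big: "\<bar>\<Sum>i<n. w i * w (\<sigma> i)\<bar> > c" using n by (simp add: c_def field_simps)
    have sp: "\<bar>\<Sum>i<n. w i * w (\<sigma> i)\<bar> \<le> \<bar>A w\<bar> + S w" using Q_split unfolding A_def S_def .
    show ?thesis
    proof (cases "2 * \<bar>A w\<bar> \<ge> c")
      case True
      have "c^2 \<le> (2 * \<bar>A w\<bar>)^2" using True c by (intro power_mono) auto
      then have "c^2 \<le> 4 * (A w)^2" by (simp add: power_mult_distrib)
      then have "1 \<le> (4 / c^2) * (A w)^2" using c by (simp add: field_simps)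
      moreover have "0 \<le> (2 / c) * S w" using S0[of w] c by simp
      moreover have "indicator X w = (1::real)" using \<open>w \<in> X\<close> by simp
      ultimately show ?thesis by linarith
    next
      case False
      then have "S w > c / 2" using big sp by linarith
      then have "1 \<le> (2 / c) * S w" using c by (simp add: field_simps)
      moreover have "0 \<le> (4 / c^2) * (A w)^2" using c by simp
      moreover have "indicator X w = (1::real)" using \<open>w \<in> X\<close> by simp
      ultimately show ?thesis by linarith
    qed
  qed
  have "measure PM X = (\<integral>w. indicator X w \<partial>PM)"
    using Xs sets.sets_into_space[OF Xs] by (simp add: Int_absorb2)
  also have "\<dots> \<le> (\<integral>w. (4 / c^2) * (A w)^2 + (2 / c) * S w \<partial>PM)"
    by (rule integral_mono[OF _ _ pw]) (use Xs iA2 iS Xf in \<open>auto intro!: integrable_real_indicator\<close>)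
  also have "\<dots> = (4 / c^2) * (\<integral>w. (A w)^2 \<partial>PM) + (2 / c) * (\<integral>w. S w \<partial>PM)"
    using iA2 iS by simp
  also have "\<dots> \<le> (4 / c^2) * (32 * real n * K^4) + (2 / c) * (6 * real n * (\<integral>x. \<bar>bK x\<bar> \<partial>\<mu>))"
  proof (intro add_mono mult_left_mono)
    show "(\<integral>w. (A w)^2 \<partial>PM) \<le> 32 * real n * K^4" using EA2 unfolding A_def .
    show "(\<integral>w. S w \<partial>PM) \<le> 6 * real n * (\<integral>x. \<bar>bK x\<bar> \<partial>\<mu>)" using ES unfolding S_def .
  qed (use c in auto)
  also have "\<dots> = 128 * K^4 / (real n * \<delta>^2) + 12 * (\<integral>x. \<bar>bK x\<bar> \<partial>\<mu>) / \<delta>"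
    using n d unfolding c_def by (simp add: field_simps power2_eq_square)
  finally show ?thesis unfolding X_def .
qed

end


lemma perm_facts:
  assumes "perm_matrix n Pn" "mat_trace n Pn = 0"
  obtains \<sigma> where "\<sigma> permutes {..<n}" "\<And>i. i < n \<Longrightarrow> \<sigma> i \<noteq> i"
    "\<And>w. quad_form n Pn w = (\<Sum>i<n. w i * w (\<sigma> i))"
proof -
  obtain \<sigma> where s: "\<sigma> permutes {..<n}" and P: "\<And>i j. i < n \<Longrightarrow> j < n \<Longrightarrow> Pn i j = (if \<sigma> i = j then 1 else 0)"
    using assms(1) unfolding perm_matrix_def by blast
  have lt: "\<sigma> i < n" if "i < n" for i using permutes_in_image[OF s, of i] that by simp
  have "(\<Sum>i<n. Pn i i) = 0" using assms(2) by (simp add: mat_trace_def)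
  moreover have "\<forall>i\<in>{..<n}. 0 \<le> Pn i i" using P by simp
  ultimately have z: "\<forall>i\<in>{..<n}. Pn i i = 0" using sum_nonneg_eq_0_iff[of "{..<n}" "\<lambda>i. Pn i i"] by simp
  have d: "\<sigma> i \<noteq> i" if "i < n" for i using z P[of i i] that by auto
  have q: "quad_form n Pn w = (\<Sum>i<n. w i * w (\<sigma> i))" for w
  proof -
    have "quad_form n Pn w = (\<Sum>i<n. \<Sum>j<n. (if \<sigma> i = j then w i * w j else 0))"
      unfolding quad_form_def by (intro sum.cong refl) (simp add: P)
    also have "\<dots> = (\<Sum>i<n. w i * w (\<sigma> i))"
      by (intro sum.cong refl) (use lt in \<open>simp add: sum.delta\<close>)
    finally show ?thesis .
  qed
  show ?thesis using that[OF s d q] by blast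
qed

theorem lemmaA8:
  fixes P :: "nat \<Rightarrow> nat \<Rightarrow> nat \<Rightarrow> real" and \<mu> :: "real measure" and \<delta> :: real
  assumes "\<And>n. n \<ge> 2 \<Longrightarrow> perm_matrix n (P n) \<and> mat_trace n (P n) = 0"
    and "in_D1 \<mu>"
    and "\<delta> > 0"
  shows "(\<lambda>n. measure (PiM {..<n} (\<lambda>_. \<mu>))
            {w \<in> space (PiM {..<n} (\<lambda>_. \<mu>)). \<bar>quad_form n (P n) w\<bar> / real n > \<delta>})
         \<longlonglongrightarrow> 0"
proof (rule LIMSEQ_I)
  fix r :: real assume r: "0 < r"
  have "\<forall>\<^sub>F k in sequentially. (\<integral>x. \<bar>x - tr (real k) x\<bar> \<partial>\<mu>) < r * \<delta> / 48"
  proof (rule order_tendstoD(2)[OF tail_lim[OF assms(2)]])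
    show "0 < r * \<delta> / 48" using r assms(3) by simp
  qed
  then obtain k where k: "(\<integral>x. \<bar>x - tr (real k) x\<bar> \<partial>\<mu>) < r * \<delta> / 48"
    unfolding eventually_sequentially by auto
  define K where "K = real k"
  have K0: "0 \<le> K" by (simp add: K_def)
  have Eb: "12 * (\<integral>x. \<bar>bm \<mu> K x\<bar> \<partial>\<mu>) / \<delta> < r / 2"
  proof -
    have "(\<integral>x. \<bar>bm \<mu> K x\<bar> \<partial>\<mu>) < r * \<delta> / 24"
      using bm_abs_int[OF assms(2) K0] k unfolding K_def by linarith
    then show ?thesis using assms(3) by (simp add: field_simps)
  qed
  obtain N :: nat where N: "256 * K^4 / (\<delta>^2 * r) < real N" using reals_Archimedean2 by blast
  show "\<exists>no. \<forall>n\<ge>no. norm (measure (PiM {..<n} (\<lambda>_. \<mu>))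
            {w \<in> space (PiM {..<n} (\<lambda>_. \<mu>)). \<bar>quad_form n (P n) w\<bar> / real n > \<delta>} - 0) < r"
  proof (intro exI allI impI)
    fix n assume n: "max N 2 \<le> n"
    then have n2: "2 \<le> n" by simp
    obtain \<sigma> where s: "\<sigma> permutes {..<n}" "\<And>i. i < n \<Longrightarrow> \<sigma> i \<noteq> i"
      "\<And>w. quad_form n (P n) w = (\<Sum>i<n. w i * w (\<sigma> i))"
      using perm_facts assms(1)[OF n2] by metis
    have npos: "0 < real n" using n2 by simp
    have "measure (PiM {..<n} (\<lambda>_. \<mu>))
            {w \<in> space (PiM {..<n} (\<lambda>_. \<mu>)). \<bar>quad_form n (P n) w\<bar> / real n > \<delta>}
        = measure (PiM {..<n} (\<lambda>_. \<mu>))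
            {w \<in> space (PiM {..<n} (\<lambda>_. \<mu>)). \<bar>\<Sum>i<n. w i * w (\<sigma> i)\<bar> / real n > \<delta>}"
      by (simp add: s(3))
    also have "\<dots> \<le> 128 * K^4 / (real n * \<delta>^2) + 12 * (\<integral>x. \<bar>bm \<mu> K x\<bar> \<partial>\<mu>) / \<delta>"
      by (rule main_bound[OF assms(2) K0 s(1) s(2)]) (use n2 assms(3) in auto)
    also have "\<dots> < r"
    proof -
      have "real N \<le> real n" using n by simp
      then have "256 * K^4 / (\<delta>^2 * r) < real n" using N by linarith
      then have "256 * K^4 < real n * (\<delta>^2 * r)" using assms(3) r by (simp add: field_simps)
      then have "128 * K^4 / (real n * \<delta>^2) < r / 2" using assms(3) r npos by (simp add: field_simps)
      then show ?thesis using Eb by linarith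
    qed
    finally show "norm (measure (PiM {..<n} (\<lambda>_. \<mu>))
            {w \<in> space (PiM {..<n} (\<lambda>_. \<mu>)). \<bar>quad_form n (P n) w\<bar> / real n > \<delta>} - 0) < r"
      by simp
  qed
qed


end
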